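(* Let $n\ge 4$, $s_k=\sin(k\pi/n)$, and let $D_1,\dots,D_{n-1}$ be positive numbers satisfying $D_kD_{l-j}\ge D_jD_{l-k}+D_lD_{k-j}$ for all integers $1\le j<k<l\le n-1$, together with $D_1=D_{n-1}=s_1$. Let $a_k=\log(D_k/s_k)$. Then (1) $a_k\ge 0$ for all $k\in\{2,\dots,n-2\}$; (2) if $a_k>0$ for some $k\in\{2,\dots,n-2\}$, then $a_k>0$ for all $k\in\{2,\dots,n-2\}$. *)

theory Defs
  imports "HOL-Analysis.Analysis"
begin

end

theory Submission
  imports Defs
begin

lemma sin_sq_identity: fixes x y :: real shows "sin x ^ 2 - sin (x - y) * sin (x + y) = sin y ^ 2"
proof -
  have "sin (x - y) * sin (x + y) = (sin x * cos y)^2 - (cos x * sin y)^2"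
  proof -
    have "sin (x - y) * sin (x + y) = (sin x * cos y - cos x * sin y) * (sin x * cos y + cos x * sin y)"
      by (simp only: sin_add sin_diff)
    then show ?thesis by (simp add: power2_eq_square algebra_simps)
  qed
  also have "\<dots> = sin x ^ 2 - sin y ^ 2"
    by (simp add: power_mult_distrib cos_squared_eq algebra_simps)
  finally show ?thesis by simp
qed

lemma keyA:
  fixes t c P x :: real
  assumes "t > 0" "c > 0" "t * P \<le> (t + c) * x^2 - c" "P \<ge> x^2"
  shows "x^2 \<ge> 1"
proof -
  have "t * x^2 \<le> t * P" using assms by (simp add: mult_left_mono)
  then have "c \<le> c * x^2" using assms(3) by (simp add: algebra_simps)
  then show ?thesis using assms(2) by simp
qed

theorem mainTheorem12:
  fixes n :: nat and D :: "nat \<Rightarrow> real"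
  assumes n4: "n \<ge> 4"
    and pos: "\<And>k. 1 \<le> k \<Longrightarrow> k \<le> n - 1 \<Longrightarrow> D k > 0"
    and ineq: "\<And>j k l. 1 \<le> j \<Longrightarrow> j < k \<Longrightarrow> k < l \<Longrightarrow> l \<le> n - 1 \<Longrightarrow>
                 D k * D (l - j) \<ge> D j * D (l - k) + D l * D (k - j)"
    and D1: "D 1 = sin (pi / real n)"
    and Dn1: "D (n - 1) = sin (pi / real n)"
  shows "(\<forall>k\<in>{2..n-2}. ln (D k / sin (real k * pi / real n)) \<ge> 0) \<and>
         ((\<exists>k\<in>{2..n-2}. ln (D k / sin (real k * pi / real n)) > 0) \<longrightarrow>
          (\<forall>k\<in>{2..n-2}. ln (D k / sin (real k * pi / real n)) > 0))"
proof -
  define s where "s i = sin (real i * pi / real n)" for i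
  define b where "b i = D i / s i" for i
  have spos: "s i > 0" if "1 \<le> i" "i \<le> n - 1" for i
  proof -
    have "real i < real n" using that n4 by linarith
    then have "real i * pi / real n < pi" using n4 by (simp add: field_simps)
    moreover have "0 < real i * pi / real n" using that n4 by simp
    ultimately show ?thesis unfolding s_def by (intro sin_gt_zero) auto
  qed
  have bpos: "b i > 0" if "1 \<le> i" "i \<le> n - 1" for i
    using spos[OF that] pos[OF that] unfolding b_def by simp
  have Db: "D i = b i * s i" if "1 \<le> i" "i \<le> n - 1" for i
    using spos[OF that] unfolding b_def by simp
  have s1: "s 1 = sin (pi / real n)" unfolding s_def by simp
  have b1: "b 1 = 1" "b (n - 1) = 1"
  proof -
    have "s (n - 1) = sin (pi - pi / real n)" unfolding s_def using n4
      by (simp add: of_nat_diff field_simps)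
    then have "s (n-1) = s 1" using s1 by simp
    moreover have "s 1 > 0" using spos[of 1] n4 by simp
    ultimately show "b 1 = 1" "b (n - 1) = 1" unfolding b_def using D1 Dn1 s1 by auto
  qed
  have ident: "s k ^ 2 - s (k-1) * s (k+1) = s 1 ^ 2" if "1 \<le> k" for k
  proof -
    have "s (k-1) = sin (real k * pi / real n - pi / real n)"
      "s (k+1) = sin (real k * pi / real n + pi / real n)"
      unfolding s_def using that by (simp_all add: of_nat_diff diff_divide_distrib add_divide_distrib left_diff_distrib distrib_right) (simp add: add.commute)
    moreover have "s k = sin (real k * pi / real n)" unfolding s_def ..
    ultimately show ?thesis using sin_sq_identity[of "real k * pi / real n" "pi / real n"] s1 by simp
  qed
  have key: "(s k ^ 2 - s 1 ^ 2) * (b (k-1) * b (k+1)) \<le> (s k ^ 2 - s 1 ^ 2 + s 1 ^ 2) * (b k)^2 - s 1 ^ 2"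
    if "k \<in> {2..n-2}" for k
  proof -
    have "D k * D k \<ge> D 1 * D 1 + D (k+1) * D (k-1)"
      using ineq[of 1 k "k+1"] that n4 by auto
    moreover have d: "D k = b k * s k" "D 1 = s 1" "D (k+1) = b (k+1) * s (k+1)" "D (k-1) = b (k-1) * s (k-1)"
      using Db that n4 b1 by auto
    moreover have q: "s (k-1) * s (k+1) = s k ^ 2 - s 1 ^ 2" using ident[of k] that by simp
    have e0: "D (k+1) * D (k-1) = (b (k-1) * b (k+1)) * (s (k-1) * s (k+1))"
      using d by (simp add: algebra_simps)
    have e1: "D (k+1) * D (k-1) = (b (k-1) * b (k+1)) * (s k ^ 2 - s 1 ^ 2)"
      using e0 q by simp
    have e2: "D k * D k = (s k ^ 2 - s 1 ^ 2 + s 1 ^ 2) * (b k)^2" and e3: "D 1 * D 1 = s 1 ^ 2"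
      using d by (simp_all add: power2_eq_square algebra_simps)
    show ?thesis using e1 e2 e3 \<open>D k * D k \<ge> _\<close> by (simp add: algebra_simps)
  qed
  have tpos: "s k ^ 2 - s 1 ^ 2 > 0" if "k \<in> {2..n-2}" for k
  proof -
    have "s (k-1) > 0" "s (k+1) > 0" using spos that n4 by auto
    then have "s (k-1) * s (k+1) > 0" by simp
    then show ?thesis using ident[of k] that by simp
  qed
  have "(1::nat) \<le> n - 1" using n4 by linarith
  then have "s 1 > 0" using spos[of 1] by simp
  then have c0: "s 1 ^ 2 > 0" by simp
  (* part 1 : minimum principle *)
  define A where "A = {1..n-1}"
  have Afin: "finite A" and Ane: "A \<noteq> {}" unfolding A_def using n4 by auto
  define m where "m = Min (b ` A)"
  have "m \<in> b ` A" unfolding m_def using Afin Ane by (intro Min_in) auto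
  then obtain k where kA: "k \<in> A" and km: "b k = m" by auto
  have mle: "m \<le> b i" if "i \<in> A" for i unfolding m_def using Afin that by simp
  have mge: "m \<ge> 1"
  proof (cases "k \<in> {2..n-2}")
    case True
    have "k-1 \<in> A" "k+1 \<in> A" using True n4 unfolding A_def by auto
    then have "b (k-1) \<ge> m" "b (k+1) \<ge> m" using mle by auto
    moreover have "m > 0" using bpos kA km unfolding A_def by auto
    ultimately have "b (k-1) * b (k+1) \<ge> m^2" by (simp add: power2_eq_square mult_mono)
    then have "(b k)^2 \<ge> 1" using keyA[OF tpos[OF True] c0 key[OF True]] km by simp
    show ?thesis
    proof (rule ccontr)
      assume "\<not> m \<ge> 1"
      then have "m * m < 1 * 1" using \<open>m > 0\<close> by (intro mult_strict_mono) auto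
      then show False using \<open>(b k)^2 \<ge> 1\<close> km by (simp add: power2_eq_square)
    qed
  next
    case False
    then have "k = 1 \<or> k = n - 1" using kA n4 unfolding A_def by auto
    then show ?thesis using b1 km by auto
  qed
  have bge: "b i \<ge> 1" if "1 \<le> i" "i \<le> n - 1" for i
    using mle[of i] mge that unfolding A_def by auto
  have propg: "b (i-1) = 1 \<and> b (i+1) = 1" if "i \<in> {2..n-2}" "b i = 1" for i
  proof -
    have h: "(s i ^ 2 - s 1 ^ 2) * (b (i-1) * b (i+1)) \<le> (s i ^ 2 - s 1 ^ 2)"
      using key[OF that(1)] that(2) by simp
    have "1 \<le> i-1" "i-1 \<le> n-1" "1 \<le> i+1" "i+1 \<le> n-1" using that n4 by auto
    then have "b (i-1) \<ge> 1" "b (i+1) \<ge> 1" using bge by auto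
    moreover have "b (i-1) * b (i+1) \<le> 1" using h tpos[OF that(1)] by simp
    ultimately show ?thesis by (metis antisym mult_le_cancel_right1 mult_le_cancel_left1 order.trans le_numeral_extra(4) less_le_not_le nle_le zero_less_one)
  qed
  have part2: "\<forall>i\<in>{2..n-2}. b i > 1" if ex: "\<exists>i\<in>{2..n-2}. b i > 1"
  proof (rule ccontr)
    assume "\<not> ?thesis"
    then obtain k where k1: "k \<in> {2..n-2}" "\<not> b k > 1" by auto
    have "1 \<le> k" "k \<le> n - 1" using k1 n4 by auto
    then have "b k \<ge> 1" using bge by auto
    then have k: "k \<in> {2..n-2}" "b k = 1" using k1 by auto
    have k2: "2 \<le> k" "k \<le> n - 2" using k(1) by auto
    have up: "b (k + d) = 1" if "k + d \<le> n - 1" for d using that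
    proof (induction d)
      case 0 then show ?case using k by simp
    next
      case (Suc d)
      have le: "k + d \<le> n - 1" using Suc.prems by linarith
      have e: "b (k+d) = 1" using Suc.IH[OF le] .
      have "2 \<le> k + d" "k + d \<le> n - 2" using Suc.prems k2 by linarith+
      then have m: "k + d \<in> {2..n-2}" by simp
      have "b (k + d + 1) = 1" using propg[OF m e] by (rule conjunct2)
      then show ?case by simp
    qed
    have down: "b (k - d) = 1" if "d \<le> k - 2" for d using that
    proof (induction d)
      case 0 then show ?case using k by simp
    next
      case (Suc d)
      have le: "d \<le> k - 2" using Suc.prems by linarith
      have e: "b (k-d) = 1" using Suc.IH[OF le] .
      have "2 \<le> k - d" "k - d \<le> n - 2" using Suc.prems k2 by linarith+
      then have m: "k - d \<in> {2..n-2}" by simp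
      have "b (k - d - 1) = 1" using propg[OF m e] by (rule conjunct1)
      moreover have "k - d - 1 = k - Suc d" by simp
      ultimately show ?case by simp
    qed
    have all1: "b i = 1" if "i \<in> {2..n-2}" for i
    proof (cases "i \<ge> k")
      case True
      have "k + (i - k) \<le> n - 1" using that True by auto
      then have "b (k + (i - k)) = 1" by (rule up)
      moreover have "k + (i - k) = i" using True by simp
      ultimately show ?thesis by simp
    next
      case False
      have "k - i \<le> k - 2" using that False by auto
      then have "b (k - (k - i)) = 1" by (rule down)
      moreover have "k - (k - i) = i" using False by simp
      ultimately show ?thesis by simp
    qed
    from ex obtain i where "i \<in> {2..n-2}" "b i > 1" by blast
    then show False using all1 by force
  qed
  have lnb: "ln (D i / sin (real i * pi / real n)) = ln (b i)" for i
    unfolding b_def s_def by simp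
  have r: "1 \<le> i" "i \<le> n - 1" if "i \<in> {2..n-2}" for i using that n4 by auto
  show ?thesis unfolding lnb
  proof (intro conjI impI ballI)
    fix i assume i: "i \<in> {2..n-2}"
    show "ln (b i) \<ge> 0" using bge[OF r[OF i]] by simp
  next
    fix i assume ex: "\<exists>k\<in>{2..n-2}. ln (b k) > 0" and i: "i \<in> {2..n-2}"
    from ex obtain k where k: "k \<in> {2..n-2}" "ln (b k) > 0" by blast
    have "b k > 1" using k(2) bpos[OF r[OF k(1)]] ln_gt_zero_iff by blast
    then have "\<forall>i\<in>{2..n-2}. b i > 1" using part2 k(1) by blast
    then have "b i > 1" using i by blast
    then show "ln (b i) > 0" by simp
  qed
qed

end
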